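(* Let $k\in\mathbb N$ and let $\pi$ be a partition of $\{1,\dots,k\}$ with $q$ blocks. Then every graph that is consistent with $\pi$ has at most $k-q+1$ connected components.
   Context: Let $\pi$ be a partition of $\{1,\dots,k\}$ with blocks $B^{(1)},\dots,B^{(q)}$; indices are taken cyclically, i.e. $0$ is identified with $k$ and $k+1$ with $1$. The closed blocks are $\overline B^{(s)}=B^{(s)}\cup\{l\in\{1,\dots,k\}: l-1\in B^{(s)}\}$. The multiplicity $m_\pi(l)$ of $l\in\{1,\dots,k\}$ is $2$ if $l$ and $l-1$ lie in the same block of $\pi$, and $1$ otherwise. A graph consistent with $\pi$ is an undirected multigraph $G$ (loops allowed, a loop contributing $2$ to the degree) with vertex set $\{1,\dots,k\}$ and $k$ edges, whose edge set can be written as a disjoint union $E^{(1)}\cup\dots\cup E^{(q)}$ such that for each $s$, all edges of $E^{(s)}$ have both ends in $\overline B^{(s)}$ and, in the subgraph with vertex set $\overline B^{(s)}$ and edge set $E^{(s)}$, every vertex $l$ has degree $m_\pi(l)$. *)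

theory Defs
  imports Main "HOL-Library.Disjoint_Sets"
begin

text \<open>Cyclic predecessor on {1..k}: 0 is identified with k.\<close>
definition cpred :: "nat \<Rightarrow> nat \<Rightarrow> nat" where
  "cpred k l = (if l = 1 then k else l - 1)"

definition closed_block :: "nat \<Rightarrow> nat set \<Rightarrow> nat set" where
  "closed_block k B = B \<union> {l \<in> {1..k}. cpred k l \<in> B}"

definition mult :: "nat \<Rightarrow> nat set set \<Rightarrow> nat \<Rightarrow> nat" where
  "mult k P l = (if \<exists>B\<in>P. l \<in> B \<and> cpred k l \<in> B then 2 else 1)"

text \<open>A multigraph on vertex set {1..k} is given by its list of edges; an edge (a,b)
  is undirected, (a,a) is a loop. Degree of l in the subgraph formed by the edges
  with indices in I (a loop counts 2).\<close>
definition deg_on :: "(nat \<times> nat) list \<Rightarrow> nat set \<Rightarrow> nat \<Rightarrow> nat" where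
  "deg_on es I l = (\<Sum>i\<in>I \<inter> {..<length es}.
      (if fst (es ! i) = l then 1 else 0) + (if snd (es ! i) = l then 1 else 0))"

text \<open>Consistency: the edges are split into classes E^(B) (B a block), via the
  assignment c of each edge index to a block.\<close>
definition consistent :: "nat \<Rightarrow> nat set set \<Rightarrow> (nat \<times> nat) list \<Rightarrow> bool" where
  "consistent k P es \<longleftrightarrow> length es = k \<and>
     (\<exists>c :: nat \<Rightarrow> nat set.
        (\<forall>i<length es. c i \<in> P \<and> fst (es ! i) \<in> closed_block k (c i)
                                  \<and> snd (es ! i) \<in> closed_block k (c i)) \<and>
        (\<forall>B\<in>P. \<forall>l\<in>closed_block k B.
            deg_on es {i. c i = B} l = mult k P l))"

definition adj :: "(nat \<times> nat) list \<Rightarrow> (nat \<times> nat) set" where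
  "adj es = {(a, b). \<exists>i<length es. es ! i = (a, b) \<or> es ! i = (b, a)}"

definition num_components :: "nat \<Rightarrow> (nat \<times> nat) list \<Rightarrow> nat" where
  "num_components k es = card ({1..k} // ((adj es)\<^sup>* \<inter> ({1..k} \<times> {1..k})))"

end

theory Submission
  imports Defs
begin

lemma blk_unique:
  assumes "partition_on A P" "B \<in> P" "B' \<in> P" "x \<in> B" "x \<in> B'"
  shows "B = B'"
  using assms partition_onD2[OF assms(1)] by (meson disjointD disjoint_iff)

lemma blk_ex:
  assumes "partition_on A P" "x \<in> A"
  shows "\<exists>B\<in>P. x \<in> B"
  using assms partition_onD1 by blast

lemma deg_one:
  assumes "deg_on es I l = 1"
  shows "\<exists>i\<in>I. i < length es \<and> ((fst (es!i) = l \<and> snd (es!i) \<noteq> l) \<or> (snd (es!i) = l \<and> fst (es!i) \<noteq> l))"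
proof -
  define f where "f i = (if fst (es ! i) = l then 1 else 0) + (if snd (es ! i) = l then 1 else (0::nat))" for i
  have s: "sum f (I \<inter> {..<length es}) = 1" using assms unfolding deg_on_def f_def by simp
  then obtain i where i: "i \<in> I \<inter> {..<length es}" "f i \<noteq> 0"
    by (metis one_neq_zero sum.neutral)
  have "f i \<le> sum f (I \<inter> {..<length es})"
    by (rule member_le_sum) (use i in auto)
  with s i have "f i = 1" by linarith
  then show ?thesis using i unfolding f_def by (auto split: if_splits)
qed

lemma no_comp_in_T:
  assumes part: "partition_on {1..k} P" and cons: "consistent k P es"
    and Xsub: "X \<subseteq> {1..k}" and Xne: "X \<noteq> {}"
    and clo1: "\<And>i. i < length es \<Longrightarrow> fst (es!i) \<in> X \<Longrightarrow> snd (es!i) \<in> X"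
    and clo2: "\<And>i. i < length es \<Longrightarrow> snd (es!i) \<in> X \<Longrightarrow> fst (es!i) \<in> X"
    and XT: "\<And>l. l \<in> X \<Longrightarrow> l \<noteq> 1 \<and> (\<exists>B\<in>P. l = Min B)"
  shows False
proof -
  obtain c where cP: "\<forall>i<length es. c i \<in> P \<and> fst (es ! i) \<in> closed_block k (c i)
                                  \<and> snd (es ! i) \<in> closed_block k (c i)"
    and deg: "\<forall>B\<in>P. \<forall>l\<in>closed_block k B. deg_on es {i. c i = B} l = mult k P l"
    using cons unfolding consistent_def by blast
  have finX: "finite X" using Xsub finite_subset by blast
  have Bsub: "B \<subseteq> {1..k}" if "B \<in> P" for B using part partition_onD1 that by blast
  have Bfin: "finite B" if "B \<in> P" for B using Bsub[OF that] finite_subset by blast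
  have Bne: "B \<noteq> {}" if "B \<in> P" for B using partition_onD3[OF part] that by blast
  define h where "h l = (SOME B. B \<in> P \<and> l \<in> B)" for l
  define g where "g l = (SOME B. B \<in> P \<and> cpred k l \<in> B)" for l
  define Q where "Q = {B \<in> P. \<exists>l\<in>X. cpred k l \<in> B}"
  have hP: "h l \<in> P \<and> l \<in> h l \<and> Min (h l) = l" if lX0: "l \<in> X" for l
  proof -
    obtain B where B: "B \<in> P" "l = Min B" using XT[OF lX0] by blast
    have lB: "l \<in> B" using B Bfin Bne Min_in by blast
    have "h l \<in> P \<and> l \<in> h l" unfolding h_def by (rule someI[of _ B]) (use B lB in auto)
    then have "h l = B" using blk_unique[OF part] B lB by blast
    then show ?thesis using B lB by auto
  qed
  have inj: "inj_on h X"
    by (rule inj_onI) (metis hP)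
  have hQ: "h l \<in> Q" if lX: "l \<in> X" for l
  proof -
    define B where "B = h l"
    have B: "B \<in> P" "l \<in> B" "Min B = l" using hP[OF lX] B_def by auto
    have l1: "l \<noteq> 1" "l \<in> {1..k}" using XT lX Xsub by auto
    have cp: "cpred k l = l - 1" using l1 unfolding cpred_def by auto
    have nB: "cpred k l \<notin> B"
    proof
      assume "cpred k l \<in> B"
      then have "Min B \<le> l - 1" using cp Bfin[OF B(1)] Min_le by metis
      then show False using B l1 by auto
    qed
    have lcl: "l \<in> closed_block k B" unfolding closed_block_def using B by auto
    have m1: "mult k P l = 1" unfolding mult_def using nB blk_unique[OF part] B by auto
    have "deg_on es {i. c i = B} l = 1" using deg B(1) lcl m1 by auto
    from deg_one[OF this] obtain i where i: "c i = B" "i < length es"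
      "(fst (es!i) = l \<and> snd (es!i) \<noteq> l) \<or> (snd (es!i) = l \<and> fst (es!i) \<noteq> l)" by auto
    obtain u where u: "u \<in> X" "u \<in> closed_block k B" "u \<noteq> l"
    proof (cases "fst (es!i) = l \<and> snd (es!i) \<noteq> l")
      case True
      then show ?thesis using that[of "snd (es!i)"] clo1[OF i(2)] lX cP i by auto
    next
      case False
      then show ?thesis using that[of "fst (es!i)"] clo2[OF i(2)] lX cP i by auto
    qed
    have "u \<notin> B"
    proof
      assume "u \<in> B"
      then have "h u = B" using hP[OF u(1)] blk_unique[OF part] B by blast
      then show False using hP[OF u(1)] B u by auto
    qed
    then have "cpred k u \<in> B" using u(2) unfolding closed_block_def by auto
    then show ?thesis using u(1) B unfolding Q_def B_def by auto
  qed
  define v where "v = Min X"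
  have vX: "v \<in> X" using finX Xne v_def Min_in by blast
  have v1: "v \<noteq> 1" "v \<in> {1..k}" using XT vX Xsub by auto
  have cpv: "cpred k v = v - 1" using v1 unfolding cpred_def by auto
  have "v - 1 \<in> {1..k}" using v1 by auto
  then obtain D where D: "D \<in> P" "v - 1 \<in> D" using blk_ex[OF part] by blast
  have "cpred k v \<in> D" using cpv D by simp
  then have DQ: "D \<in> Q" using D vX unfolding Q_def by blast
  have Dnh: "D \<notin> h ` X"
  proof
    assume "D \<in> h ` X"
    then obtain l where l: "l \<in> X" "D = h l" by auto
    have "Min D = l" using hP[OF l(1)] l by auto
    moreover have "Min D \<le> v - 1" using D Bfin Min_le by blast
    moreover have "v \<le> l" using l(1) finX v_def by auto
    ultimately show False using v1 by auto
  qed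
  have Qg: "Q \<subseteq> g ` X"
  proof
    fix B assume "B \<in> Q"
    then obtain l where l: "B \<in> P" "l \<in> X" "cpred k l \<in> B" unfolding Q_def by auto
    have "g l \<in> P \<and> cpred k l \<in> g l" unfolding g_def by (rule someI[of _ B]) (use l in auto)
    then have "g l = B" using blk_unique[OF part] l by blast
    then show "B \<in> g ` X" using l by auto
  qed
  have sub: "insert D (h ` X) \<subseteq> g ` X" using Qg DQ hQ by auto
  have "card (insert D (h ` X)) = card X + 1"
    using Dnh finX card_image[OF inj] by simp
  moreover have "card (insert D (h ` X)) \<le> card (g ` X)"
    using sub finX by (simp add: card_mono)
  moreover have "card (g ` X) \<le> card X" using card_image_le finX by blast
  ultimately show False by linarith
qed

theorem mainTheorem2:
  fixes k :: nat and P :: "nat set set" and es :: "(nat \<times> nat) list"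
  assumes "partition_on {1..k} P"
      and "consistent k P es"
  shows "num_components k es \<le> k - card P + 1"
proof -
  note part = assms(1)
  obtain c where cP: "\<forall>i<length es. c i \<in> P \<and> fst (es ! i) \<in> closed_block k (c i)
                                  \<and> snd (es ! i) \<in> closed_block k (c i)"
    using assms(2) unfolding consistent_def by blast
  have Bsub: "B \<subseteq> {1..k}" if "B \<in> P" for B using part partition_onD1 that by blast
  have Bfin: "finite B" if "B \<in> P" for B using Bsub[OF that] finite_subset by blast
  have Bne: "B \<noteq> {}" if "B \<in> P" for B using partition_onD3[OF part] that by blast
  have clsub: "closed_block k B \<subseteq> {1..k}" if "B \<in> P" for B
    using Bsub[OF that] unfolding closed_block_def by auto
  have ends: "fst (es!i) \<in> {1..k} \<and> snd (es!i) \<in> {1..k}" if "i < length es" for i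
    using cP that clsub by blast
  define R where "R = (adj es)\<^sup>* \<inter> ({1..k} \<times> {1..k})"
  have symadj: "sym (adj es)" unfolding adj_def sym_def by auto
  have eq: "equiv {1..k} R"
    unfolding equiv_def R_def
  proof (intro conjI)
    show "refl_on {1..k} ((adj es)\<^sup>* \<inter> {1..k} \<times> {1..k})"
      unfolding refl_on_def by auto
    show "sym ((adj es)\<^sup>* \<inter> {1..k} \<times> {1..k})"
      by (rule sym_Int[OF sym_rtrancl[OF symadj]]) (auto simp: sym_def)
    show "trans ((adj es)\<^sup>* \<inter> {1..k} \<times> {1..k})"
      by (rule trans_Int[OF trans_rtrancl]) (auto simp: trans_def)
  qed auto
  define T where "T = Min ` P - {1}"
  define S where "S = {1..k} - T"
  have TS: "T \<subseteq> {1..k}" unfolding T_def using Bsub Bfin Bne Min_in by blast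
  have quot: "{1..k} // R \<subseteq> (\<lambda>s. R``{s}) ` S"
  proof
    fix X assume "X \<in> {1..k} // R"
    then obtain x where x: "x \<in> {1..k}" "X = R``{x}" unfolding quotient_def by auto
    have Xsub: "X \<subseteq> {1..k}" using x unfolding R_def by auto
    have xX: "x \<in> X" using x unfolding R_def by auto
    have step: "b \<in> X" if "a \<in> X" "(a, b) \<in> adj es" "b \<in> {1..k}" for a b
      using that x unfolding R_def by (auto intro: rtrancl_into_rtrancl)
    have "\<not> X \<subseteq> T"
    proof
      assume XT: "X \<subseteq> T"
      show False
      proof (rule no_comp_in_T[OF part assms(2) Xsub])
        show "X \<noteq> {}" using xX by auto
        show "snd (es!i) \<in> X" if "i < length es" "fst (es!i) \<in> X" for i
        proof -
          have "(fst (es!i), snd (es!i)) \<in> adj es" unfolding adj_def using that(1) by force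
          then show ?thesis using step[of "fst (es!i)" "snd (es!i)"] that ends[OF that(1)] by blast
        qed
        show "fst (es!i) \<in> X" if "i < length es" "snd (es!i) \<in> X" for i
        proof -
          have "(snd (es!i), fst (es!i)) \<in> adj es" unfolding adj_def using that(1) by force
          then show ?thesis using step[of "snd (es!i)" "fst (es!i)"] that ends[OF that(1)] by blast
        qed
        show "l \<noteq> 1 \<and> (\<exists>B\<in>P. l = Min B)" if "l \<in> X" for l
          using XT that unfolding T_def by auto
      qed
    qed
    then obtain s where s: "s \<in> X" "s \<notin> T" by auto
    have "(x, s) \<in> R" using s x by auto
    then have "X = R``{s}" using x eq equiv_class_eq_iff by metis
    moreover have "s \<in> S" using s Xsub unfolding S_def by auto
    ultimately show "X \<in> (\<lambda>s. R``{s}) ` S" by auto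
  qed
  have "num_components k es = card ({1..k} // R)"
    unfolding num_components_def R_def by simp
  also have "\<dots> \<le> card ((\<lambda>s. R``{s}) ` S)"
    using quot by (intro card_mono) (auto simp: S_def)
  also have "\<dots> \<le> card S" by (rule card_image_le) (auto simp: S_def)
  also have "card S = k - card T" unfolding S_def using TS
    by (simp add: card_Diff_subset finite_subset)
  finally have A: "num_components k es \<le> k - card T" .
  have injMin: "inj_on Min P"
  proof (rule inj_onI)
    fix B B' assume "B \<in> P" "B' \<in> P" "Min B = Min B'"
    then show "B = B'" using blk_unique[OF part] Bfin Bne Min_in by metis
  qed
  have "card (Min ` P) = card P" using card_image[OF injMin] .
  moreover have "card (Min ` P) - 1 \<le> card T" unfolding T_def
    by (metis card_Diff_singleton_if diff_le_self order_refl)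
  ultimately have "card P - 1 \<le> card T" by simp
  then show ?thesis using A by linarith
qed

end
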